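(* Let $\lambda_1,\lambda_2>0$, $\alpha\in\mathbb{R}\setminus\{0\}$, let $\delta^{\star}(\alpha)=1/\alpha^2$ if $\alpha\le 2$ and $\delta^{\star}(\alpha)=\frac{1}{2\alpha}\exp\{1-\frac{\alpha}{2}\}$ if $\alpha>2$, and $|\delta|\le\delta^{\star}(\alpha)$. Let $(X,Y)$ be a random vector on $(0,\infty)^2$ with joint distribution function $$F(x,y)=\left(1-e^{-x^2/2\lambda_1^2}\right)\left(1-e^{-y^2/2\lambda_2^2}\right)+\delta\left(1-e^{\alpha\left(e^{-x^2/2\lambda_1^2}-e^{-x^2/\lambda_1^2}\right)}\right)\left(1-e^{\alpha\left(e^{-y^2/2\lambda_2^2}-e^{-y^2/\lambda_2^2}\right)}\right),\quad x,y>0.$$ Then for all real $r,s\ge0$, $$E(X^rY^s)=\lambda_1^r\lambda_2^s2^{(r+s)/2}\Gamma\!\left(1+\tfrac r2\right)\Gamma\!\left(1+\tfrac s2\right)\left[1+\delta\alpha^2 S_r S_s\right],$$ where for $m\ge0$ $$S_m=\sum_{k=0}^{\infty}\frac{\alpha^k}{k!}\sum_{t=0}^{k}(-1)^t\binom{k}{t}\left(2(k+t+2)^{-\frac{m+2}{2}}-(k+t+1)^{-\frac{m+2}{2}}\right).$$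
   Context: $\Gamma$ denotes the gamma function. *)

theory Defs
  imports "HOL-Probability.Probability"
begin

definition delta_star :: "real \<Rightarrow> real" where
  "delta_star \<alpha> = (if \<alpha> \<le> 2 then 1 / \<alpha>\<^sup>2 else (1 / (2 * \<alpha>)) * exp (1 - \<alpha> / 2))"

definition F_joint :: "real \<Rightarrow> real \<Rightarrow> real \<Rightarrow> real \<Rightarrow> real \<Rightarrow> real \<Rightarrow> real" where
  "F_joint l1 l2 \<alpha> \<delta> x y =
     (1 - exp (- x\<^sup>2 / (2 * l1\<^sup>2))) * (1 - exp (- y\<^sup>2 / (2 * l2\<^sup>2)))
     + \<delta> * (1 - exp (\<alpha> * (exp (- x\<^sup>2 / (2 * l1\<^sup>2)) - exp (- x\<^sup>2 / l1\<^sup>2))))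
         * (1 - exp (\<alpha> * (exp (- y\<^sup>2 / (2 * l2\<^sup>2)) - exp (- y\<^sup>2 / l2\<^sup>2))))"

definition S_coef :: "real \<Rightarrow> real \<Rightarrow> real" where
  "S_coef \<alpha> m = (\<Sum>k. \<alpha> ^ k / fact k *
     (\<Sum>t = 0..k. (-1) ^ t * real (k choose t) *
        (2 * (real (k + t + 2)) powr (- (m + 2) / 2) - (real (k + t + 1)) powr (- (m + 2) / 2))))"

end

theory Submission
  imports Defs
begin


lemma binom_coef_id:
  fixes y :: "nat \<Rightarrow> real"
  shows "(\<Sum>t\<le>Suc k. (-1)^t * real (Suc k choose t) * real (Suc k + t) * y t)
       = real (Suc k) * (\<Sum>t\<le>k. (-1)^t * real (k choose t) * (y t - 2 * y (Suc t)))"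
proof -
  have A: "(\<Sum>t\<le>Suc k. (-1)^t * real (Suc k choose t) * real (Suc k + t) * y t)
     = (\<Sum>t\<le>Suc k. (-1)^t * real (Suc k) * real (k choose t) * y t)
       + (\<Sum>t\<le>Suc k. (-1)^t * 2 * real (Suc k) * real (if t = 0 then 0 else k choose (t - 1)) * y t)"
  proof -
    have "real (Suc k choose t) * real (Suc k + t) = real (Suc k) * real (k choose t)
          + 2 * real (Suc k) * real (if t = 0 then 0 else k choose (t - 1))" for t
    proof (cases t)
      case 0 then show ?thesis by simp
    next
      case (Suc u)
      have e1: "Suc k choose Suc u = (k choose Suc u) + (k choose u)" by simp
      have e2: "Suc u * (Suc k choose Suc u) = Suc k * (k choose u)"
        by (metis Suc_times_binomial_eq mult.commute)
      have "real (Suc k choose Suc u) * real (Suc k + Suc u)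
          = real (Suc k) * real (Suc k choose Suc u) + real (Suc u * (Suc k choose Suc u))"
        by (simp add: algebra_simps)
      also have "\<dots> = real (Suc k) * real (k choose Suc u) + 2 * real (Suc k) * real (k choose u)"
      proof -
        have "real (Suc u * (Suc k choose Suc u)) = real (Suc k) * real (k choose u)"
          using e2 by (metis of_nat_mult)
        moreover have "real (Suc k choose Suc u) = real (k choose Suc u) + real (k choose u)"
          using e1 by (metis of_nat_add)
        ultimately show ?thesis by (simp add: algebra_simps)
      qed
      finally show ?thesis using Suc by simp
    qed
    then show ?thesis by (simp add: sum.distrib[symmetric] algebra_simps)
  qed
  have B: "(\<Sum>t\<le>Suc k. (-1)^t * real (Suc k) * real (k choose t) * y t)
        = real (Suc k) * (\<Sum>t\<le>k. (-1)^t * real (k choose t) * y t)"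
    by (simp add: sum_distrib_left algebra_simps binomial_eq_0)
  have C: "(\<Sum>t\<le>Suc k. (-1)^t * 2 * real (Suc k) * real (if t = 0 then 0 else k choose (t - 1)) * y t)
        = - real (Suc k) * (\<Sum>t\<le>k. (-1)^t * real (k choose t) * (2 * y (Suc t)))"
    by (subst sum.atMost_Suc_shift) (simp add: sum_distrib_left sum.distrib sum_negf algebra_simps)
  show ?thesis unfolding A B C by (simp add: algebra_simps sum_subtractf sum_distrib_left sum.distrib sum_negf)
qed



definition Sterm :: "real \<Rightarrow> real \<Rightarrow> nat \<Rightarrow> real" where
  "Sterm \<alpha> m k = \<alpha> ^ k / fact k *
     (\<Sum>t = 0..k. (-1) ^ t * real (k choose t) *
        (2 * (real (k + t + 2)) powr (- (m + 2) / 2) - (real (k + t + 1)) powr (- (m + 2) / 2)))"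

definition Aterm :: "real \<Rightarrow> real \<Rightarrow> nat \<Rightarrow> real" where
  "Aterm \<alpha> m k = \<alpha> ^ Suc k / fact (Suc k) *
     (\<Sum>t\<le>Suc k. (-1) ^ t * real (Suc k choose t) * real (Suc k + t) powr (- m / 2))"

lemma S_coef_Sterm: "S_coef \<alpha> m = (\<Sum>k. Sterm \<alpha> m k)"
  unfolding S_coef_def Sterm_def ..

lemma Aterm_Sterm: "Aterm \<alpha> m k = - \<alpha> * Sterm \<alpha> m k"
proof -
  define y where "y t = real (Suc k + t) powr (- (m + 2) / 2)" for t
  have py: "real (Suc k + t) powr (- m / 2) = real (Suc k + t) * y t" for t
  proof -
    have "real (Suc k + t) powr (- m / 2) = real (Suc k + t) powr (1 + (- (m + 2) / 2))"
      by (simp add: field_simps)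
    also have "\<dots> = real (Suc k + t) * y t"
      unfolding y_def by (subst powr_add) simp
    finally show ?thesis .
  qed
  have E1: "(\<Sum>t\<le>Suc k. (-1) ^ t * real (Suc k choose t) * real (Suc k + t) powr (- m / 2))
      = real (Suc k) * (\<Sum>t\<le>k. (-1)^t * real (k choose t) * (y t - 2 * y (Suc t)))"
    unfolding py using binom_coef_id[of k y] by (simp add: mult.assoc)
  have E2: "(\<Sum>t\<le>k. (-1)^t * real (k choose t) * (y t - 2 * y (Suc t)))
     = - (\<Sum>t = 0..k. (-1) ^ t * real (k choose t) *
        (2 * (real (k + t + 2)) powr (- (m + 2) / 2) - (real (k + t + 1)) powr (- (m + 2) / 2)))"
    by (simp add: y_def atMost_atLeast0 sum_negf[symmetric] algebra_simps)
  have E3: "\<alpha>^Suc k / fact (Suc k) * real (Suc k) = \<alpha> * (\<alpha>^k/fact k)"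
  proof -
    have "fact (Suc k) = real (Suc k) * (fact k :: real)" by (simp add: fact_Suc)
    then show ?thesis by (simp add: field_simps del: of_nat_Suc)
  qed
  show ?thesis
    unfolding Aterm_def Sterm_def E1 E2
    by (metis (no_types, lifting) E3 mult.assoc mult_minus_left mult_minus_right)
qed

lemma Aterm_0: "Aterm \<alpha> 0 k = 0"
proof -
  have "(\<Sum>t\<le>Suc k. (-1) ^ t * real (Suc k choose t) * real (Suc k + t) powr (- 0 / 2))
     = (\<Sum>t\<le>Suc k. (-1) ^ t * real (Suc k choose t))" by simp
  also have "\<dots> = 0"
    using choose_alternating_sum[of "Suc k", where 'a=real] by (simp add: mult.commute)
  finally show ?thesis unfolding Aterm_def by simp
qed

lemma S_coef_0: "\<alpha> \<noteq> 0 \<Longrightarrow> S_coef \<alpha> 0 = 0"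
proof -
  assume a: "\<alpha> \<noteq> 0"
  have "Sterm \<alpha> 0 = (\<lambda>_. 0)"
    using Aterm_Sterm[of \<alpha> 0] Aterm_0[of \<alpha>] a by (intro ext) simp
  then show ?thesis unfolding S_coef_Sterm by simp
qed



lemma base_nn:
  fixes c r :: real assumes c: "c > 0" and r: "r > 0"
  shows "(\<integral>\<^sup>+x. ennreal (indicator {0..} x * (r * x powr (r-1) * exp (-c*x\<^sup>2))) \<partial>lborel)
         = ennreal (c powr (-r/2) * Gamma (1 + r/2))"
proof -
  define p where "p = r/2"
  have p: "p > 0" using r by (simp add: p_def)
  define F where "F t = p * c powr (-p) * (t powr (p-1) / exp t)" for t
  define G where "G x = r * x powr (r-1) * exp(-c*x\<^sup>2)" for x
  have FG: "F (c * x\<^sup>2) * (2 * c * x) = G x" if "x \<ge> 0" for x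
  proof (cases "x = 0")
    case True then show ?thesis by (simp add: F_def G_def)
  next
    case False
    then have x: "x > 0" using that by simp
    have e: "x\<^sup>2 = x powr 2" using x by (simp add: powr_realpow)
    have "(c * x powr 2) powr (p - 1) = c powr (p - 1) * (x powr 2) powr (p - 1)"
      using x c by (simp add: powr_mult)
    then have "(c * x\<^sup>2) powr (p - 1) = c powr (p - 1) * x powr (2 * p - 2)"
      unfolding e by (simp add: powr_powr algebra_simps)
    moreover have "c powr (-p) * c powr (p - 1) * c = 1"
    proof -
      have "c powr (-p) * c powr (p - 1) * c powr 1 = c powr (-p + (p - 1) + 1)"
        by (simp only: powr_add)
      then show ?thesis using c by simp
    qed
    moreover have "x powr (2 * p - 2) * x = x powr (r - 1)"
    proof -
      have "x powr (2 * p - 2) * x powr 1 = x powr (2 * p - 2 + 1)"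
        by (simp only: powr_add)
      then show ?thesis using x by (simp add: p_def)
    qed
    ultimately have "F (c * x\<^sup>2) * (2 * c * x)
         = 2 * p * (c powr (-p) * c powr (p - 1) * c) * (x powr (2 * p - 2) * x) * exp (- c * x\<^sup>2)"
    proof -
      have ee: "exp (- c * x\<^sup>2) = inverse (exp (c * x\<^sup>2))"
        by (simp add: exp_minus[symmetric])
      show ?thesis unfolding F_def ee \<open>(c * x\<^sup>2) powr (p - 1) = c powr (p - 1) * x powr (2 * p - 2)\<close>
        by (simp add: divide_inverse mult_ac)
    qed
    also have "\<dots> = G x"
      using \<open>c powr (-p) * c powr (p - 1) * c = 1\<close> \<open>x powr (2 * p - 2) * x = x powr (r - 1)\<close>
      by (simp add: G_def p_def)
    finally show ?thesis .
  qed
  have sub: "(\<integral>\<^sup>+t. ennreal (F t) * indicator {0..c*b\<^sup>2} t \<partial>lborel)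
           = (\<integral>\<^sup>+x. ennreal (G x) * indicator {0..b} x \<partial>lborel)" if b: "b \<ge> 0" for b
  proof -
    have "(\<integral>\<^sup>+t. F t * indicator {(\<lambda>x. c*x\<^sup>2) 0..(\<lambda>x. c*x\<^sup>2) b} t \<partial>lborel)
        = (\<integral>\<^sup>+x. F ((\<lambda>x. c*x\<^sup>2) x) * (2*c*x) * indicator {0..b} x \<partial>lborel)"
    proof (rule nn_integral_substitution)
      show "set_borel_measurable borel {(\<lambda>x. c*x\<^sup>2) 0..(\<lambda>x. c*x\<^sup>2) b} F"
        unfolding set_borel_measurable_def F_def by measurable
      show "((\<lambda>x. c*x\<^sup>2) has_real_derivative 2*c*x) (at x)" for x
        by (auto intro!: derivative_eq_intros)
      show "continuous_on {0..b} (\<lambda>x. 2*c*x)" by (intro continuous_intros)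
      show "0 \<le> 2*c*x" if "x \<in> {0..b}" for x using that c by simp
    qed (use b in simp)
    also have "\<dots> = (\<integral>\<^sup>+x. ennreal (G x) * indicator {0..b} x \<partial>lborel)"
      by (intro nn_integral_cong) (auto split: split_indicator simp: FG)
    finally show ?thesis by (simp add: nn_integral_set_ennreal)
  qed
  have L1: "(\<lambda>n. \<integral>\<^sup>+t. ennreal (F t) * indicator {0..c*(real n)\<^sup>2} t \<partial>lborel)
       \<longlonglongrightarrow> (\<integral>\<^sup>+t. ennreal (F t) * indicator {0..} t \<partial>lborel)"
  proof (rule nn_integral_LIMSEQ)
    show "incseq (\<lambda>n t. ennreal (F t) * indicator {0..c*(real n)\<^sup>2} t)"
    proof (rule incseq_SucI, rule le_funI)
      fix n t
      have "c*(real n)\<^sup>2 \<le> c*(real (Suc n))\<^sup>2" using c by (intro mult_left_mono power_mono) auto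
      then show "ennreal (F t) * indicator {0..c*(real n)\<^sup>2} t \<le> ennreal (F t) * indicator {0..c*(real (Suc n))\<^sup>2} t"
        by (auto split: split_indicator)
    qed
  next
    fix t :: real
    show "(\<lambda>n. ennreal (F t) * indicator {0..c*(real n)\<^sup>2} t) \<longlonglongrightarrow> ennreal (F t) * indicator {0..} t"
    proof (rule tendsto_eventually)
      obtain N :: nat where N: "t / c \<le> real N" "N \<ge> 1"
        by (metis max.cobounded1 max.cobounded2 of_nat_max real_arch_simple order_trans)
      have "ennreal (F t) * indicator {0..c*(real n)\<^sup>2} t = ennreal (F t) * indicator {0..} t"
        if "n \<ge> N" for n
      proof -
        have "t / c \<le> real n" using N that by linarith
        also have "real n \<le> (real n)\<^sup>2" using N that by (simp add: power2_eq_square)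
        finally have "t \<le> c * (real n)\<^sup>2" using c by (simp add: field_simps)
        then show ?thesis by (auto split: split_indicator)
      qed
      then show "eventually (\<lambda>n. ennreal (F t) * indicator {0..c*(real n)\<^sup>2} t = ennreal (F t) * indicator {0..} t) sequentially"
        by (auto simp: eventually_sequentially)
    qed
  qed (simp add: F_def)
  have L2: "(\<lambda>n. \<integral>\<^sup>+x. ennreal (G x) * indicator {0..real n} x \<partial>lborel)
       \<longlonglongrightarrow> (\<integral>\<^sup>+x. ennreal (G x) * indicator {0..} x \<partial>lborel)"
  proof (rule nn_integral_LIMSEQ)
    show "incseq (\<lambda>n x. ennreal (G x) * indicator {0..real n} x)"
    proof (rule incseq_SucI, rule le_funI)
      fix n x
      show "ennreal (G x) * indicator {0..real n} x \<le> ennreal (G x) * indicator {0..real (Suc n)} x"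
        by (auto split: split_indicator)
    qed
  next
    fix x :: real
    show "(\<lambda>n. ennreal (G x) * indicator {0..real n} x) \<longlonglongrightarrow> ennreal (G x) * indicator {0..} x"
    proof (rule tendsto_eventually)
      obtain N :: nat where N: "x \<le> real N" using real_arch_simple by blast
      have "ennreal (G x) * indicator {0..real n} x = ennreal (G x) * indicator {0..} x"
        if "n \<ge> N" for n
      proof -
        have "x \<le> real n" using N that by linarith
        then show ?thesis by (auto split: split_indicator)
      qed
      then show "eventually (\<lambda>n. ennreal (G x) * indicator {0..real n} x = ennreal (G x) * indicator {0..} x) sequentially"
        by (auto simp: eventually_sequentially)
    qed
  qed (simp add: G_def)
  have FGn: "(\<lambda>n. \<integral>\<^sup>+t. ennreal (F t) * indicator {0..c*(real n)\<^sup>2} t \<partial>lborel)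
     = (\<lambda>n. \<integral>\<^sup>+x. ennreal (G x) * indicator {0..real n} x \<partial>lborel)"
    using sub by (intro ext) simp
  have eq1: "(\<integral>\<^sup>+t. ennreal (F t) * indicator {0..} t \<partial>lborel)
        = (\<integral>\<^sup>+x. ennreal (G x) * indicator {0..} x \<partial>lborel)"
    using LIMSEQ_unique[OF L1[unfolded FGn] L2] .
  have "(\<integral>\<^sup>+t. ennreal (F t) * indicator {0..} t \<partial>lborel)
      = (\<integral>\<^sup>+t. ennreal (p * c powr (-p)) * ennreal (indicator {0..} t * t powr (p - 1) / exp t) \<partial>lborel)"
    using p c by (intro nn_integral_cong) (auto split: split_indicator simp: F_def ennreal_mult[symmetric])
  also have "\<dots> = ennreal (p * c powr (-p)) * ennreal (Gamma p)"
    by (subst nn_integral_cmult) (simp_all add: Gamma_conv_nn_integral_real[OF p])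
  also have "\<dots> = ennreal (c powr (-r/2) * Gamma (1 + r/2))"
  proof -
    have "p \<notin> \<int>\<^sub>\<le>\<^sub>0" using p by (auto dest: nonpos_Ints_nonpos)
    then have "Gamma (1 + r/2) = p * Gamma p" using Gamma_plus1[of p] by (simp add: p_def add.commute)
    then show ?thesis using p c
      by (simp add: ennreal_mult[symmetric] p_def mult_ac)
  qed
  finally have "(\<integral>\<^sup>+x. ennreal (G x) * indicator {0..} x \<partial>lborel) = ennreal (c powr (-r/2) * Gamma (1 + r/2))"
    using eq1 by simp
  moreover have "(\<integral>\<^sup>+x. ennreal (indicator {0..} x * (r * x powr (r-1) * exp (-c*x\<^sup>2))) \<partial>lborel)
     = (\<integral>\<^sup>+x. ennreal (G x) * indicator {0..} x \<partial>lborel)"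
    by (intro nn_integral_cong) (auto split: split_indicator simp: G_def)
  ultimately show ?thesis by simp
qed



definition mu :: "real \<Rightarrow> real measure" where
  "mu r = (if r = 0 then return borel 0
           else density lborel (\<lambda>a. ennreal (indicator {0..} a * (r * a powr (r - 1)))))"

lemma sets_mu[measurable_cong, simp]: "sets (mu r) = sets borel"
  by (simp add: mu_def)

lemma space_mu[simp]: "space (mu r) = UNIV"
  by (simp add: mu_def)

lemma mu_sigma_finite: "sigma_finite_measure (mu r)"
proof (cases "r = 0")
  case True
  then show ?thesis unfolding mu_def
    by (simp add: prob_space_imp_sigma_finite prob_space_return)
next
  case False
  have "sigma_finite_measure (density lborel (\<lambda>a. ennreal (indicator {0..} a * (r * a powr (r - 1)))))"
    by (subst sigma_finite_measure.sigma_finite_iff_density_finite[OF sigma_finite_lborel]) auto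
  then show ?thesis using False unfolding mu_def by simp
qed

lemma mu_AE_nonneg: "AE a in mu r. 0 \<le> a"
proof (cases "r = 0")
  case True
  then show ?thesis unfolding mu_def by (simp add: AE_return)
next
  case False
  then have e: "mu r = density lborel (\<lambda>a. ennreal (indicator {0..} a * (r * a powr (r - 1))))"
    by (simp add: mu_def)
  show ?thesis
    unfolding e by (subst AE_density) (auto split: split_indicator intro!: AE_I2)
qed

lemma nn_integral_mu:
  assumes "r > 0" and [measurable]: "f \<in> borel_measurable borel"
  shows "(\<integral>\<^sup>+a. f a \<partial>mu r) = (\<integral>\<^sup>+a. ennreal (indicator {0..} a * (r * a powr (r - 1))) * f a \<partial>lborel)"
  using assms unfolding mu_def by (simp add: nn_integral_density)

lemma mu_layer:
  assumes x: "x > 0" and r: "r \<ge> 0"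
  shows "(\<integral>\<^sup>+a. indicator {..<x} a \<partial>mu r) = ennreal (x powr r)"
proof (cases "r = 0")
  case True
  then show ?thesis using x unfolding mu_def by (simp add: nn_integral_return)
next
  case False
  then have r: "r > 0" using r by simp
  have hi: "((\<lambda>a. r * a powr (r - 1)) has_integral (r * (x powr (r - 1 + 1) / (r - 1 + 1)))) {0..x}"
    using has_integral_powr_from_0[of "r - 1" x] r x by (intro has_integral_mult_right) auto
  have "(\<integral>\<^sup>+a. indicator {..<x} a \<partial>mu r)
      = (\<integral>\<^sup>+a. ennreal (indicator {0..} a * (r * a powr (r - 1))) * indicator {..<x} a \<partial>lborel)"
    by (rule nn_integral_mu[OF r]) simp
  also have "\<dots> = (\<integral>\<^sup>+a. ennreal (indicator {0..x} a * (r * a powr (r - 1))) \<partial>lborel)"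
    by (intro nn_integral_cong_AE, use AE_lborel_singleton[of x] in eventually_elim)
       (auto split: split_indicator)
  also have "\<dots> = ennreal (r * (x powr (r - 1 + 1) / (r - 1 + 1)))"
    by (rule nn_integral_has_integral_lebesgue[OF _ hi]) (use r in auto)
  also have "r * (x powr (r - 1 + 1) / (r - 1 + 1)) = x powr r" using r by simp
  finally show ?thesis .
qed

lemma mu_exp:
  assumes c: "c > 0" and r: "r \<ge> 0"
  shows "integrable (mu r) (\<lambda>a. exp (- c * a\<^sup>2))"
    and "(\<integral>a. exp (- c * a\<^sup>2) \<partial>mu r) = c powr (- r / 2) * Gamma (1 + r / 2)"
proof -
  have "(\<integral>\<^sup>+a. ennreal (exp (- c * a\<^sup>2)) \<partial>mu r) = ennreal (c powr (- r / 2) * Gamma (1 + r / 2))"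
  proof (cases "r = 0")
    case True
    then show ?thesis using c unfolding mu_def by (simp add: nn_integral_return)
  next
    case False
    then have r: "r > 0" using r by simp
    have "(\<integral>\<^sup>+a. ennreal (exp (- c * a\<^sup>2)) \<partial>mu r)
       = (\<integral>\<^sup>+a. ennreal (indicator {0..} a * (r * a powr (r-1) * exp (-c*a\<^sup>2))) \<partial>lborel)"
      using r by (subst nn_integral_mu) (auto intro!: nn_integral_cong simp: ennreal_mult[symmetric] split: split_indicator)
    also have "\<dots> = ennreal (c powr (-r/2) * Gamma (1 + r/2))"
      by (rule base_nn[OF c r])
    finally show ?thesis by simp
  qed
  moreover have "0 \<le> c powr (- r / 2) * Gamma (1 + r / 2)"
    using r by (intro mult_nonneg_nonneg) (auto intro: less_imp_le)
  ultimately have "integrable (mu r) (\<lambda>a. exp (- c * a\<^sup>2)) \<and>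
      (\<integral>a. exp (- c * a\<^sup>2) \<partial>mu r) = c powr (- r / 2) * Gamma (1 + r / 2)"
    by (subst nn_integral_eq_integrable[symmetric]) auto
  then show "integrable (mu r) (\<lambda>a. exp (- c * a\<^sup>2))"
    and "(\<integral>a. exp (- c * a\<^sup>2) \<partial>mu r) = c powr (- r / 2) * Gamma (1 + r / 2)" by auto
qed



lemma powr_scale:
  fixes l r :: real and n :: real
  assumes l: "l > 0" and n: "n > 0"
  shows "(n / (2 * l\<^sup>2)) powr (- r / 2) = l powr r * 2 powr (r / 2) * n powr (- r / 2)"
proof -
  have "(n / (2 * l\<^sup>2)) powr (- r / 2) = n powr (- r / 2) / (2 * l\<^sup>2) powr (- r / 2)"
    using l n by (simp add: powr_divide)
  also have "(2 * l\<^sup>2) powr (- r / 2) = inverse ((2 * l\<^sup>2) powr (r / 2))"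
    by (simp add: powr_minus[symmetric])
  also have "(2 * l\<^sup>2) powr (r / 2) = 2 powr (r / 2) * (l\<^sup>2) powr (r / 2)"
    using l by (simp add: powr_mult)
  also have "(l\<^sup>2) powr (r / 2) = l powr r"
  proof -
    have "l\<^sup>2 = l powr 2" using l by (simp add: powr_realpow)
    then show ?thesis by (simp add: powr_powr)
  qed
  finally show ?thesis by (simp add: field_simps)
qed

definition Lc :: "real \<Rightarrow> real \<Rightarrow> real" where
  "Lc l r = l powr r * 2 powr (r / 2) * Gamma (1 + r / 2)"

lemma mu_wpow:
  assumes l: "l > 0" and r: "r \<ge> 0" and n: "n \<ge> 1"
  shows "integrable (mu r) (\<lambda>a. exp (- a\<^sup>2 / (2 * l\<^sup>2)) ^ n)"
    and "(\<integral>a. exp (- a\<^sup>2 / (2 * l\<^sup>2)) ^ n \<partial>mu r) = Lc l r * real n powr (- r / 2)"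
proof -
  define c where "c = real n / (2 * l\<^sup>2)"
  have c: "c > 0" using l n by (simp add: c_def)
  have e: "exp (- a\<^sup>2 / (2 * l\<^sup>2)) ^ n = exp (- c * a\<^sup>2)" for a
    by (simp add: c_def exp_of_nat_mult[symmetric] field_simps)
  show "integrable (mu r) (\<lambda>a. exp (- a\<^sup>2 / (2 * l\<^sup>2)) ^ n)"
    unfolding e using mu_exp(1)[OF c r] .
  have "(\<integral>a. exp (- a\<^sup>2 / (2 * l\<^sup>2)) ^ n \<partial>mu r) = c powr (- r / 2) * Gamma (1 + r / 2)"
    unfolding e using mu_exp(2)[OF c r] .
  also have "c powr (- r / 2) = l powr r * 2 powr (r / 2) * real n powr (- r / 2)"
    unfolding c_def using l n by (intro powr_scale) auto
  finally show "(\<integral>a. exp (- a\<^sup>2 / (2 * l\<^sup>2)) ^ n \<partial>mu r) = Lc l r * real n powr (- r / 2)"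
    by (simp add: Lc_def mult_ac)
qed

lemma mu_u:
  assumes l: "l > 0" and r: "r \<ge> 0"
  shows "integrable (mu r) (\<lambda>a. exp (- a\<^sup>2 / (2 * l\<^sup>2)))"
    and "(\<integral>a. exp (- a\<^sup>2 / (2 * l\<^sup>2)) \<partial>mu r) = Lc l r"
  using mu_wpow[OF l r, of 1] by simp_all



lemma poly_expand:
  fixes w :: real
  shows "(w - w\<^sup>2) ^ m = (\<Sum>t\<le>m. (-1)^t * real (m choose t) * w ^ (m + t))"
proof -
  have "(w - w\<^sup>2) ^ m = w ^ m * (-w + 1) ^ m"
    by (simp add: power_mult_distrib[symmetric] power2_eq_square algebra_simps)
  also have "(-w + 1) ^ m = (\<Sum>t\<le>m. real (m choose t) * (-w) ^ t * 1 ^ (m - t))"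
    by (rule binomial_ring)
  also have "w ^ m * \<dots> = (\<Sum>t\<le>m. (-1)^t * real (m choose t) * w ^ (m + t))"
    unfolding sum_distrib_left
    by (intro sum.cong refl) (simp add: power_add power_minus[of w] mult_ac)
  finally show ?thesis .
qed

lemma mu_v:
  fixes \<alpha> :: real
  assumes l: "l > 0" and r: "r \<ge> 0"
  shows "integrable (mu r) (\<lambda>a. 1 - exp (\<alpha> * (exp (- a\<^sup>2 / (2 * l\<^sup>2)) - exp (- a\<^sup>2 / l\<^sup>2))))"
    and "(\<integral>a. 1 - exp (\<alpha> * (exp (- a\<^sup>2 / (2 * l\<^sup>2)) - exp (- a\<^sup>2 / l\<^sup>2))) \<partial>mu r)
          = Lc l r * \<alpha> * S_coef \<alpha> r"
proof -
  define w where "w a = exp (- a\<^sup>2 / (2 * l\<^sup>2))" for a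
  define P where "P a = w a - (w a)\<^sup>2" for a
  define f where "f k a = (\<alpha> * P a) ^ Suc k / fact (Suc k)" for k a
  define v where "v a = 1 - exp (\<alpha> * (exp (- a\<^sup>2 / (2 * l\<^sup>2)) - exp (- a\<^sup>2 / l\<^sup>2)))" for a
  have cw: "continuous_on UNIV w" unfolding w_def using l by (intro continuous_intros) auto
  have cP: "continuous_on UNIV P" unfolding P_def by (intro continuous_intros cw)
  have cf: "continuous_on UNIV (f k)" for k unfolding f_def by (intro continuous_intros cP) auto
  have [measurable]: "w \<in> borel_measurable borel" "P \<in> borel_measurable borel"
    "f k \<in> borel_measurable borel" for k
    using cw cP cf by (auto intro: borel_measurable_continuous_onI)
  have ww: "exp (- a\<^sup>2 / l\<^sup>2) = (w a)\<^sup>2" for a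
  proof -
    have "exp (- a\<^sup>2 / l\<^sup>2) = exp (real 2 * (- a\<^sup>2 / (2 * l\<^sup>2)))"
      using l by (simp add: field_simps)
    then show ?thesis unfolding w_def by (simp only: exp_of_nat_mult)
  qed
  have vP: "v a = 1 - exp (\<alpha> * P a)" for a unfolding v_def P_def ww w_def ..
  have w01: "0 < w a" "w a \<le> 1" for a
    unfolding w_def using l by (auto simp: divide_nonpos_pos)
  have P01: "0 \<le> P a" "P a \<le> w a" "P a \<le> 1" for a
  proof -
    have "0 \<le> w a * (1 - w a)" using w01[of a] by simp
    then show "0 \<le> P a" by (simp add: P_def power2_eq_square algebra_simps)
    show "P a \<le> w a" by (simp add: P_def)
    then show "P a \<le> 1" using w01[of a] by linarith
  qed
  have wint: "integrable (mu r) w" "(\<integral>a. w a \<partial>mu r) = Lc l r"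
    unfolding w_def using mu_u[OF l r] by auto
  have Lc_pos: "Lc l r > 0" unfolding Lc_def using l r by (intro mult_pos_pos) auto
  have fsums: "(\<lambda>k. f k a) sums (exp (\<alpha> * P a) - 1)" for a
  proof -
    have "(\<lambda>n. (\<alpha> * P a) ^ n /\<^sub>R fact n) sums (exp (\<alpha> * P a) - 1 + 1)"
      using exp_converges[of "\<alpha> * P a"] by simp
    then have "(\<lambda>n. (\<alpha> * P a) ^ Suc n /\<^sub>R fact (Suc n)) sums (exp (\<alpha> * P a) - 1)"
      by (subst sums_Suc_iff) simp
    then show ?thesis unfolding f_def by (simp add: divide_inverse mult.commute)
  qed
  have v_eq: "v a = - (\<Sum>k. f k a)" for a
    using sums_unique[OF fsums[of a]] vP[of a] by simp
  define B where "B k = \<bar>\<alpha>\<bar> ^ Suc k / fact (Suc k)" for k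
  have Bsum: "summable B"
  proof -
    have "(\<lambda>n. \<bar>\<alpha>\<bar> ^ n /\<^sub>R fact n) sums (exp \<bar>\<alpha>\<bar> - 1 + 1)"
      using exp_converges[of "\<bar>\<alpha>\<bar>"] by simp
    then have "(\<lambda>n. \<bar>\<alpha>\<bar> ^ Suc n /\<^sub>R fact (Suc n)) sums (exp \<bar>\<alpha>\<bar> - 1)"
      by (subst sums_Suc_iff) simp
    then show ?thesis unfolding B_def by (simp add: divide_inverse mult.commute sums_summable)
  qed
  have fbound: "norm (f k a) \<le> B k * w a" for k a
  proof -
    have "norm (f k a) = \<bar>\<alpha>\<bar> ^ Suc k * P a ^ Suc k / fact (Suc k)"
      unfolding f_def using P01[of a] by (simp add: abs_mult power_mult_distrib power_abs)
    also have "P a ^ Suc k \<le> P a"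
      using P01[of a] by (simp add: power_le_one mult_left_le)
    then have "\<bar>\<alpha>\<bar> ^ Suc k * P a ^ Suc k / fact (Suc k) \<le> \<bar>\<alpha>\<bar> ^ Suc k * w a / fact (Suc k)"
      using P01[of a] by (intro divide_right_mono mult_left_mono) auto
    finally show ?thesis by (simp add: B_def)
  qed
  have Bw_int: "integrable (mu r) (\<lambda>x. B k * w x)" for k using wint(1) by simp
  have fint: "integrable (mu r) (f k)" for k
  proof (rule Bochner_Integration.integrable_bound[OF Bw_int[of k]])
    show "f k \<in> borel_measurable (mu r)" by measurable
    show "AE x in mu r. norm (f k x) \<le> norm (B k * w x)"
    proof (intro AE_I2)
      fix x have "B k * w x \<ge> 0" using w01[of x] by (simp add: B_def)
      then show "norm (f k x) \<le> norm (B k * w x)" using fbound[of k x] by simp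
    qed
  qed
  have fsum_ae: "AE a in mu r. summable (\<lambda>k. norm (f k a))"
  proof (intro AE_I2)
    fix a
    show "summable (\<lambda>k. norm (f k a))"
      by (rule summable_comparison_test[OF _ summable_mult2[OF Bsum, of "w a"]])
         (use fbound in auto)
  qed
  have fint_bound: "(\<integral>a. norm (f k a) \<partial>mu r) \<le> B k * Lc l r" for k
  proof -
    have "(\<integral>a. norm (f k a) \<partial>mu r) \<le> (\<integral>a. B k * w a \<partial>mu r)"
      by (intro integral_mono integrable_norm fint Bw_int fbound)
    also have "\<dots> = B k * Lc l r" using wint(2) by simp
    finally show ?thesis .
  qed
  have fsum_int: "summable (\<lambda>k. (\<integral>a. norm (f k a) \<partial>mu r))"
    by (rule summable_comparison_test[OF _ summable_mult2[OF Bsum, of "Lc l r"]])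
       (use fint_bound in auto)
  note S = integrable_suminf[OF fint fsum_ae fsum_int] integral_suminf[OF fint fsum_ae fsum_int]
    summable_integral[OF fint fsum_ae fsum_int]
  show "integrable (mu r) (\<lambda>a. 1 - exp (\<alpha> * (exp (- a\<^sup>2 / (2 * l\<^sup>2)) - exp (- a\<^sup>2 / l\<^sup>2))))"
    using integrable_minus[OF S(1)] v_eq unfolding v_def by simp
  have fk: "(\<integral>a. f k a \<partial>mu r) = Lc l r * Aterm \<alpha> r k" for k
  proof -
    have fa: "f k a = \<alpha> ^ Suc k / fact (Suc k) *
         (\<Sum>t\<le>Suc k. (-1)^t * real (Suc k choose t) * w a ^ (Suc k + t))" for a
      unfolding f_def P_def poly_expand[symmetric] by (simp add: power_mult_distrib)
    have Isum: "(\<integral>a. (\<Sum>t\<le>Suc k. (-1)^t * real (Suc k choose t) * w a ^ (Suc k + t)) \<partial>mu r)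
        = (\<Sum>t\<le>Suc k. (-1)^t * real (Suc k choose t) * (\<integral>a. w a ^ (Suc k + t) \<partial>mu r))"
    proof -
      have "(\<integral>a. (\<Sum>t\<le>Suc k. (-1)^t * real (Suc k choose t) * w a ^ (Suc k + t)) \<partial>mu r)
          = (\<Sum>t\<le>Suc k. (\<integral>a. (-1)^t * real (Suc k choose t) * w a ^ (Suc k + t) \<partial>mu r))"
      proof (rule Bochner_Integration.integral_sum)
        fix t assume "t \<in> {..Suc k}"
        have "integrable (mu r) (\<lambda>a. w a ^ (Suc k + t))"
          using mu_wpow(1)[OF l r, of "Suc k + t"] unfolding w_def by simp
        then show "integrable (mu r) (\<lambda>a. (-1)^t * real (Suc k choose t) * w a ^ (Suc k + t))"
          by simp
      qed
      also have "\<dots> = (\<Sum>t\<le>Suc k. (-1)^t * real (Suc k choose t) * (\<integral>a. w a ^ (Suc k + t) \<partial>mu r))"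
        by (intro sum.cong refl integral_mult_right_zero)
      finally show ?thesis .
    qed
    have "(\<integral>a. f k a \<partial>mu r) = (\<integral>a. \<alpha> ^ Suc k / fact (Suc k) *
         (\<Sum>t\<le>Suc k. (-1)^t * real (Suc k choose t) * w a ^ (Suc k + t)) \<partial>mu r)"
      by (rule Bochner_Integration.integral_cong[OF refl]) (rule fa)
    also have "\<dots> = \<alpha> ^ Suc k / fact (Suc k) *
         (\<integral>a. (\<Sum>t\<le>Suc k. (-1)^t * real (Suc k choose t) * w a ^ (Suc k + t)) \<partial>mu r)"
      by (rule integral_mult_right_zero)
    also have "\<dots> = \<alpha> ^ Suc k / fact (Suc k) *
         (\<Sum>t\<le>Suc k. (-1)^t * real (Suc k choose t) * (\<integral>a. w a ^ (Suc k + t) \<partial>mu r))"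
      unfolding Isum ..
    also have "\<dots> = \<alpha> ^ Suc k / fact (Suc k) *
         (\<Sum>t\<le>Suc k. (-1)^t * real (Suc k choose t) * (Lc l r * real (Suc k + t) powr (- r / 2)))"
    proof (intro arg_cong2[where f="(*)"] refl sum.cong)
      fix t assume "t \<in> {..Suc k}"
      have "1 \<le> Suc k + t" by simp
      note e = mu_wpow(2)[OF l r this]
      show "(\<integral>a. w a ^ (Suc k + t) \<partial>mu r) = Lc l r * real (Suc k + t) powr (- r / 2)"
        unfolding w_def e by (rule refl)
    qed
    also have "(\<Sum>t\<le>Suc k. (-1)^t * real (Suc k choose t) * (Lc l r * real (Suc k + t) powr (- r / 2)))
        = Lc l r * (\<Sum>t\<le>Suc k. (-1)^t * real (Suc k choose t) * real (Suc k + t) powr (- r / 2))"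
      unfolding sum_distrib_left by (intro sum.cong) (simp_all only: mult_ac refl)
    also have "\<alpha> ^ Suc k / fact (Suc k) * (Lc l r * (\<Sum>t\<le>Suc k. (-1)^t * real (Suc k choose t) * real (Suc k + t) powr (- r / 2)))
        = Lc l r * Aterm \<alpha> r k"
      unfolding Aterm_def by (rule mult.left_commute)
    finally show ?thesis .
  qed
  have sumA: "summable (Aterm \<alpha> r)"
    using S(3) Lc_pos unfolding fk by (simp add: summable_cmult_iff)
  have sumAS: "(\<Sum>k. Aterm \<alpha> r k) = - \<alpha> * S_coef \<alpha> r"
  proof (cases "\<alpha> = 0")
    case True then show ?thesis by (simp add: Aterm_def)
  next
    case False
    have "summable (\<lambda>k. - \<alpha> * Sterm \<alpha> r k)"
      using sumA by (simp add: Aterm_Sterm[abs_def])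
    then have "summable (\<lambda>k. (- \<alpha>) * Sterm \<alpha> r k)" by simp
    then have "summable (Sterm \<alpha> r)" using False summable_cmult_iff[of "- \<alpha>" "Sterm \<alpha> r"] by simp
    then have "(\<Sum>k. (- \<alpha>) * Sterm \<alpha> r k) = (- \<alpha>) * (\<Sum>k. Sterm \<alpha> r k)"
      by (rule suminf_mult)
    then show ?thesis unfolding S_coef_Sterm Aterm_Sterm by simp
  qed
  have "(\<integral>a. v a \<partial>mu r) = (\<integral>a. - (\<Sum>k. f k a) \<partial>mu r)" by (simp add: v_eq)
  also have "\<dots> = - (\<Sum>k. (\<integral>a. f k a \<partial>mu r))" using S(2) by simp
  also have "\<dots> = - (\<Sum>k. Lc l r * Aterm \<alpha> r k)" by (simp add: fk)
  also have "\<dots> = - (Lc l r * (\<Sum>k. Aterm \<alpha> r k))" using sumA by (simp add: suminf_mult)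
  also have "\<dots> = Lc l r * \<alpha> * S_coef \<alpha> r" by (simp add: sumAS)
  finally show "(\<integral>a. 1 - exp (\<alpha> * (exp (- a\<^sup>2 / (2 * l\<^sup>2)) - exp (- a\<^sup>2 / l\<^sup>2))) \<partial>mu r)
          = Lc l r * \<alpha> * S_coef \<alpha> r" unfolding v_def .
qed



lemma marg_generic:
  fixes M :: "'a measure" and X Y :: "'a \<Rightarrow> real" and U1 U2 V1 V2 :: "real \<Rightarrow> real"
  assumes P: "prob_space M"
    and [measurable]: "X \<in> borel_measurable M" "Y \<in> borel_measurable M"
    and pos: "AE \<omega> in M. X \<omega> > 0 \<and> Y \<omega> > 0"
    and H: "\<And>x y. x > 0 \<Longrightarrow> y > 0 \<Longrightarrow>
           measure M {\<omega> \<in> space M. X \<omega> \<le> x \<and> Y \<omega> \<le> y} = (1 - U1 x) * (1 - U2 y) + \<delta> * V1 x * V2 y"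
    and U2lim: "(\<lambda>n. U2 (real n)) \<longlonglongrightarrow> 0" and V2lim: "(\<lambda>n. V2 (real n)) \<longlonglongrightarrow> 0"
    and U10: "U1 0 = 1"
    and x: "x \<ge> 0"
  shows "measure M {\<omega> \<in> space M. X \<omega> \<le> x} = 1 - U1 x"
proof (cases "x = 0")
  case True
  interpret prob_space M by (rule P)
  have "AE \<omega> in M. \<not> X \<omega> \<le> x" using pos by eventually_elim (use True in auto)
  then have "\<P>(\<omega> in M. X \<omega> \<le> x) = 0" by (rule prob_eq_0_AE)
  then show ?thesis using True U10 by simp
next
  case False
  then have x: "x > 0" using x by simp
  interpret prob_space M by (rule P)
  define A where "A n = {\<omega> \<in> space M. X \<omega> \<le> x \<and> Y \<omega> \<le> real n}" for n
  have "(\<lambda>n. measure M (A n)) \<longlonglongrightarrow> measure M (\<Union>n. A n)"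
  proof (rule finite_Lim_measure_incseq)
    show "range A \<subseteq> sets M" unfolding A_def by auto
    show "incseq A" unfolding A_def incseq_def by auto
  qed
  moreover have "(\<Union>n. A n) = {\<omega> \<in> space M. X \<omega> \<le> x}"
  proof -
    have "\<exists>n. Y \<omega> \<le> real n" for \<omega> using real_arch_simple by blast
    then show ?thesis unfolding A_def by auto
  qed
  ultimately have L1: "(\<lambda>n. measure M (A n)) \<longlonglongrightarrow> measure M {\<omega> \<in> space M. X \<omega> \<le> x}" by simp
  have L2: "(\<lambda>n. (1 - U1 x) * (1 - U2 (real n)) + \<delta> * V1 x * V2 (real n))
      \<longlonglongrightarrow> (1 - U1 x) * (1 - 0) + \<delta> * V1 x * 0"
    by (intro tendsto_intros U2lim V2lim)
  have ev: "eventually (\<lambda>n. (1 - U1 x) * (1 - U2 (real n)) + \<delta> * V1 x * V2 (real n) = measure M (A n)) sequentially"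
    unfolding eventually_sequentially A_def using x
    by (intro exI[of _ 1] allI impI, subst H) auto
  have "(\<lambda>n. measure M (A n)) \<longlonglongrightarrow> (1 - U1 x) * (1 - 0) + \<delta> * V1 x * 0"
    using tendsto_cong[OF ev] L2 by simp
  from LIMSEQ_unique[OF L1 this] show ?thesis by simp
qed

lemma surv_generic:
  fixes M :: "'a measure" and X Y :: "'a \<Rightarrow> real" and U1 U2 V1 V2 :: "real \<Rightarrow> real"
  assumes P: "prob_space M"
    and [measurable]: "X \<in> borel_measurable M" "Y \<in> borel_measurable M"
    and J: "measure M {\<omega> \<in> space M. X \<omega> \<le> a \<and> Y \<omega> \<le> b} = (1 - U1 a) * (1 - U2 b) + \<delta> * V1 a * V2 b"
    and MX: "measure M {\<omega> \<in> space M. X \<omega> \<le> a} = 1 - U1 a"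
    and MY: "measure M {\<omega> \<in> space M. Y \<omega> \<le> b} = 1 - U2 b"
  shows "measure M {\<omega> \<in> space M. a < X \<omega> \<and> b < Y \<omega>} = U1 a * U2 b + \<delta> * V1 a * V2 b"
proof -
  interpret prob_space M by (rule P)
  define A where "A = {\<omega> \<in> space M. X \<omega> \<le> a}"
  define B where "B = {\<omega> \<in> space M. Y \<omega> \<le> b}"
  have [measurable]: "A \<in> sets M" "B \<in> sets M" unfolding A_def B_def by auto
  have e: "{\<omega> \<in> space M. a < X \<omega> \<and> b < Y \<omega>} = space M - (A \<union> B)"
    unfolding A_def B_def by auto
  have "measure M (space M - (A \<union> B)) = 1 - measure M (A \<union> B)"
    using finite_measure_compl[of "A \<union> B"] prob_space by simp
  also have "measure M (A \<union> B) = measure M A + measure M (B - A)"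
    by (rule finite_measure_Union') auto
  also have "measure M (B - A) = measure M B - measure M (B \<inter> A)"
    by (rule finite_measure_Diff') auto
  also have "B \<inter> A = {\<omega> \<in> space M. X \<omega> \<le> a \<and> Y \<omega> \<le> b}" unfolding A_def B_def by auto
  finally show ?thesis unfolding e using J MX MY A_def B_def by (simp add: algebra_simps)
qed



lemma moment_generic:
  fixes M :: "'a measure" and X Y :: "'a \<Rightarrow> real" and U1 U2 V1 V2 :: "real \<Rightarrow> real"
  assumes P: "prob_space M"
    and [measurable]: "X \<in> borel_measurable M" "Y \<in> borel_measurable M"
    and pos: "AE \<omega> in M. X \<omega> > 0 \<and> Y \<omega> > 0"
    and surv: "\<And>a b. a \<ge> 0 \<Longrightarrow> b \<ge> 0 \<Longrightarrow>
        measure M {\<omega> \<in> space M. a < X \<omega> \<and> b < Y \<omega>} = U1 a * U2 b + \<delta> * V1 a * V2 b"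
    and r: "r \<ge> 0" and s: "s \<ge> 0"
    and [measurable]: "U1 \<in> borel_measurable borel" "V1 \<in> borel_measurable borel"
      "U2 \<in> borel_measurable borel" "V2 \<in> borel_measurable borel"
    and iU1: "integrable (mu r) U1" and iV1: "integrable (mu r) V1"
    and iU2: "integrable (mu s) U2" and iV2: "integrable (mu s) V2"
  shows "integrable M (\<lambda>\<omega>. X \<omega> powr r * Y \<omega> powr s) \<and>
    (\<integral>\<omega>. X \<omega> powr r * Y \<omega> powr s \<partial>M)
      = (\<integral>a. U1 a \<partial>mu r) * (\<integral>b. U2 b \<partial>mu s) + \<delta> * (\<integral>a. V1 a \<partial>mu r) * (\<integral>b. V2 b \<partial>mu s)"
proof -
  interpret prob_space M by (rule P)
  have PR: "pair_sigma_finite M (mu r)" and PS: "pair_sigma_finite M (mu s)"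
    unfolding pair_sigma_finite_def using mu_sigma_finite prob_space_imp_sigma_finite[OF P] by auto
  define IS where "IS = (\<integral>b. U2 b \<partial>mu s)"
  define JS where "JS = (\<integral>b. V2 b \<partial>mu s)"
  define g where "g a = U1 a * IS + \<delta> * V1 a * JS" for a
  have [measurable]: "g \<in> borel_measurable borel" unfolding g_def by measurable
  have stepA: "(\<integral>\<^sup>+\<omega>. (if a < X \<omega> then ennreal (Y \<omega> powr s) else 0) \<partial>M) = ennreal (g a) \<and> g a \<ge> 0"
    if a: "a \<ge> 0" for a
  proof -
    have "(\<integral>\<^sup>+\<omega>. (if a < X \<omega> then ennreal (Y \<omega> powr s) else 0) \<partial>M)
        = (\<integral>\<^sup>+\<omega>. (\<integral>\<^sup>+b. (if a < X \<omega> \<and> b < Y \<omega> then 1 else 0) \<partial>mu s) \<partial>M)"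
    proof (rule nn_integral_cong_AE)
      show "AE \<omega> in M. (if a < X \<omega> then ennreal (Y \<omega> powr s) else 0)
          = (\<integral>\<^sup>+b. (if a < X \<omega> \<and> b < Y \<omega> then 1 else 0) \<partial>mu s)"
        using pos
      proof eventually_elim
        case (elim \<omega>)
        show ?case
        proof (cases "a < X \<omega>")
          case True
          have "(\<integral>\<^sup>+b. (if a < X \<omega> \<and> b < Y \<omega> then 1 else 0) \<partial>mu s) = (\<integral>\<^sup>+b. indicator {..<Y \<omega>} b \<partial>mu s)"
            using True by (intro nn_integral_cong) (auto split: split_indicator)
          also have "\<dots> = ennreal (Y \<omega> powr s)" using mu_layer[of "Y \<omega>" s] elim s by simp
          finally show ?thesis using True by simp
        qed simp
      qed
    qed
    also have "\<dots> = (\<integral>\<^sup>+b. (\<integral>\<^sup>+\<omega>. (if a < X \<omega> \<and> b < Y \<omega> then 1 else 0) \<partial>M) \<partial>mu s)"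
      by (rule pair_sigma_finite.Fubini'[OF PS, symmetric]) measurable
    also have "\<dots> = (\<integral>\<^sup>+b. ennreal (U1 a * U2 b + \<delta> * V1 a * V2 b) \<partial>mu s)"
    proof (rule nn_integral_cong_AE)
      show "AE b in mu s. (\<integral>\<^sup>+\<omega>. (if a < X \<omega> \<and> b < Y \<omega> then 1 else 0) \<partial>M) = ennreal (U1 a * U2 b + \<delta> * V1 a * V2 b)"
        using mu_AE_nonneg[of s]
      proof eventually_elim
        case (elim b)
        have "(\<integral>\<^sup>+\<omega>. (if a < X \<omega> \<and> b < Y \<omega> then 1 else 0) \<partial>M)
            = (\<integral>\<^sup>+\<omega>. indicator {\<omega> \<in> space M. a < X \<omega> \<and> b < Y \<omega>} \<omega> \<partial>M)"
          by (intro nn_integral_cong) (auto split: split_indicator)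
        also have "\<dots> = emeasure M {\<omega> \<in> space M. a < X \<omega> \<and> b < Y \<omega>}"
          by (rule nn_integral_indicator) measurable
        also have "\<dots> = ennreal (measure M {\<omega> \<in> space M. a < X \<omega> \<and> b < Y \<omega>})"
          by (rule emeasure_eq_measure)
        also have "\<dots> = ennreal (U1 a * U2 b + \<delta> * V1 a * V2 b)" using surv[OF a elim] by simp
        finally show ?case .
      qed
    qed
    also have "\<dots> = ennreal (\<integral>b. U1 a * U2 b + \<delta> * V1 a * V2 b \<partial>mu s)"
    proof (rule nn_integral_eq_integral)
      show "integrable (mu s) (\<lambda>b. U1 a * U2 b + \<delta> * V1 a * V2 b)"
        using iU2 iV2 by (intro Bochner_Integration.integrable_add integrable_mult_right) auto
      show "AE b in mu s. 0 \<le> U1 a * U2 b + \<delta> * V1 a * V2 b"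
        using mu_AE_nonneg[of s]
      proof eventually_elim
        case (elim b)
        show ?case using surv[OF a elim] measure_nonneg by metis
      qed
    qed
    also have "(\<integral>b. U1 a * U2 b + \<delta> * V1 a * V2 b \<partial>mu s) = g a"
    proof -
      have "(\<integral>b. U1 a * U2 b + \<delta> * V1 a * V2 b \<partial>mu s) = (\<integral>b. U1 a * U2 b \<partial>mu s) + (\<integral>b. (\<delta> * V1 a) * V2 b \<partial>mu s)"
        using iU2 iV2 by (intro Bochner_Integration.integral_add integrable_mult_right) auto
      then show ?thesis unfolding g_def IS_def JS_def by simp
    qed
    finally have e1: "(\<integral>\<^sup>+\<omega>. (if a < X \<omega> then ennreal (Y \<omega> powr s) else 0) \<partial>M) = ennreal (g a)" .
    have "0 \<le> (\<integral>b. U1 a * U2 b + \<delta> * V1 a * V2 b \<partial>mu s)"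
      using mu_AE_nonneg[of s]
      by (intro integral_nonneg_AE, eventually_elim) (use surv[OF a] measure_nonneg in metis)
    then have "g a \<ge> 0" using \<open>(\<integral>b. U1 a * U2 b + \<delta> * V1 a * V2 b \<partial>mu s) = g a\<close> by simp
    with e1 show ?thesis by simp
  qed
  have "(\<integral>\<^sup>+\<omega>. ennreal (X \<omega> powr r * Y \<omega> powr s) \<partial>M)
      = (\<integral>\<^sup>+\<omega>. (\<integral>\<^sup>+a. (if a < X \<omega> then ennreal (Y \<omega> powr s) else 0) \<partial>mu r) \<partial>M)"
  proof (rule nn_integral_cong_AE)
    show "AE \<omega> in M. ennreal (X \<omega> powr r * Y \<omega> powr s)
        = (\<integral>\<^sup>+a. (if a < X \<omega> then ennreal (Y \<omega> powr s) else 0) \<partial>mu r)"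
      using pos
    proof eventually_elim
      case (elim \<omega>)
      have "(\<integral>\<^sup>+a. (if a < X \<omega> then ennreal (Y \<omega> powr s) else 0) \<partial>mu r)
          = (\<integral>\<^sup>+a. ennreal (Y \<omega> powr s) * indicator {..<X \<omega>} a \<partial>mu r)"
        by (intro nn_integral_cong) (auto split: split_indicator)
      also have "\<dots> = ennreal (Y \<omega> powr s) * (\<integral>\<^sup>+a. indicator {..<X \<omega>} a \<partial>mu r)"
        by (rule nn_integral_cmult) measurable
      also have "\<dots> = ennreal (Y \<omega> powr s) * ennreal (X \<omega> powr r)"
        using mu_layer[of "X \<omega>" r] elim r by simp
      also have "\<dots> = ennreal (X \<omega> powr r * Y \<omega> powr s)"
        by (simp add: ennreal_mult[symmetric] mult.commute)
      finally show ?case by simp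
    qed
  qed
  also have "\<dots> = (\<integral>\<^sup>+a. (\<integral>\<^sup>+\<omega>. (if a < X \<omega> then ennreal (Y \<omega> powr s) else 0) \<partial>M) \<partial>mu r)"
    by (rule pair_sigma_finite.Fubini'[OF PR, symmetric]) measurable
  also have "\<dots> = (\<integral>\<^sup>+a. ennreal (g a) \<partial>mu r)"
    using mu_AE_nonneg[of r]
    by (intro nn_integral_cong_AE, eventually_elim) (use stepA in blast)
  also have "\<dots> = ennreal (\<integral>a. g a \<partial>mu r)"
  proof (rule nn_integral_eq_integral)
    show "integrable (mu r) g"
      unfolding g_def using iU1 iV1
      by (intro Bochner_Integration.integrable_add integrable_mult_left integrable_mult_right) auto
    show "AE a in mu r. 0 \<le> g a"
      using mu_AE_nonneg[of r] by eventually_elim (use stepA in blast)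
  qed
  finally have E: "(\<integral>\<^sup>+\<omega>. ennreal (X \<omega> powr r * Y \<omega> powr s) \<partial>M) = ennreal (\<integral>a. g a \<partial>mu r)" .
  have gnn: "0 \<le> (\<integral>a. g a \<partial>mu r)"
    using mu_AE_nonneg[of r] by (intro integral_nonneg_AE, eventually_elim) (use stepA in blast)
  have gval: "(\<integral>a. g a \<partial>mu r) = (\<integral>a. U1 a \<partial>mu r) * IS + \<delta> * (\<integral>a. V1 a \<partial>mu r) * JS"
  proof -
    have "(\<integral>a. g a \<partial>mu r) = (\<integral>a. U1 a * IS \<partial>mu r) + (\<integral>a. \<delta> * JS * V1 a \<partial>mu r)"
      unfolding g_def using iU1 iV1
      by (subst Bochner_Integration.integral_add[symmetric])
         (auto intro!: integral_cong simp: mult_ac)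
    then show ?thesis by (simp add: mult_ac)
  qed
  have "integrable M (\<lambda>\<omega>. X \<omega> powr r * Y \<omega> powr s) \<and>
      (\<integral>\<omega>. X \<omega> powr r * Y \<omega> powr s \<partial>M) = (\<integral>a. g a \<partial>mu r)"
    using E gnn by (subst nn_integral_eq_integrable[symmetric]) auto
  then show ?thesis unfolding gval IS_def JS_def by simp
qed



lemma exp_sq_lim:
  fixes c :: real assumes c: "c > 0"
  shows "(\<lambda>n. exp (- (real n)\<^sup>2 / c)) \<longlonglongrightarrow> 0"
proof -
  have L0: "LIM n sequentially. (real n)^2 :> at_top"
    by (rule filterlim_pow_at_top[OF _ filterlim_real_sequentially]) simp
  have "LIM n sequentially. (1/c) * (real n)^2 :> at_top"
    using filterlim_tendsto_pos_mult_at_top[OF tendsto_const[of "1/c"] _ L0] c by simp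
  then have "LIM n sequentially. - ((1/c) * (real n)^2) :> at_bot"
    by (simp add: filterlim_uminus_at_top)
  then have "((\<lambda>n. exp (- ((1/c) * (real n)^2))) \<longlongrightarrow> 0) sequentially"
    by (rule filterlim_compose[OF exp_at_bot])
  moreover have "- ((1/c) * (real n)^2) = - (real n)\<^sup>2 / c" for n by simp
  ultimately show ?thesis by simp
qed

theorem proposition6:
  fixes M :: "'a measure" and X Y :: "'a \<Rightarrow> real"
    and l1 l2 \<alpha> \<delta> r s :: real
  assumes "prob_space M"
    and "l1 > 0" and "l2 > 0" and "\<alpha> \<noteq> 0"
    and "\<bar>\<delta>\<bar> \<le> delta_star \<alpha>"
    and "X \<in> borel_measurable M" and "Y \<in> borel_measurable M"
    and "AE \<omega> in M. X \<omega> > 0 \<and> Y \<omega> > 0"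
    and "\<And>x y. x > 0 \<Longrightarrow> y > 0 \<Longrightarrow>
           measure M {\<omega> \<in> space M. X \<omega> \<le> x \<and> Y \<omega> \<le> y} = F_joint l1 l2 \<alpha> \<delta> x y"
    and "r \<ge> 0" and "s \<ge> 0"
  shows "integrable M (\<lambda>\<omega>. X \<omega> powr r * Y \<omega> powr s) \<and>
         (\<integral>\<omega>. X \<omega> powr r * Y \<omega> powr s \<partial>M) =
           l1 powr r * l2 powr s * 2 powr ((r + s) / 2) * Gamma (1 + r / 2) * Gamma (1 + s / 2)
           * (1 + \<delta> * \<alpha>\<^sup>2 * S_coef \<alpha> r * S_coef \<alpha> s)"
proof -
  note P = assms(1) and l1 = assms(2) and l2 = assms(3)
  note XM = assms(6) and YM = assms(7) and pos = assms(8) and H0 = assms(9)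
  note r = assms(10) and s = assms(11)
  interpret prob_space M by (rule P)
  note [measurable] = XM YM
  have evX: "{\<omega> \<in> space M. X \<omega> \<le> 0} \<in> sets M" by measurable
  have evY: "{\<omega> \<in> space M. Y \<omega> \<le> 0} \<in> sets M" by measurable
  define U1 where "U1 a = exp (- a\<^sup>2 / (2 * l1\<^sup>2))" for a
  define U2 where "U2 a = exp (- a\<^sup>2 / (2 * l2\<^sup>2))" for a
  define V1 where "V1 a = 1 - exp (\<alpha> * (exp (- a\<^sup>2 / (2 * l1\<^sup>2)) - exp (- a\<^sup>2 / l1\<^sup>2)))" for a
  define V2 where "V2 a = 1 - exp (\<alpha> * (exp (- a\<^sup>2 / (2 * l2\<^sup>2)) - exp (- a\<^sup>2 / l2\<^sup>2)))" for a
  have [measurable]: "U1 \<in> borel_measurable borel" "U2 \<in> borel_measurable borel"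
    "V1 \<in> borel_measurable borel" "V2 \<in> borel_measurable borel"
    unfolding U1_def U2_def V1_def V2_def
    by (auto intro!: borel_measurable_continuous_onI continuous_intros)
  have FJ: "F_joint l1 l2 \<alpha> \<delta> x y = (1 - U1 x) * (1 - U2 y) + \<delta> * V1 x * V2 y" for x y
    unfolding F_joint_def U1_def U2_def V1_def V2_def ..
  have H: "measure M {\<omega> \<in> space M. X \<omega> \<le> x \<and> Y \<omega> \<le> y} = (1 - U1 x) * (1 - U2 y) + \<delta> * V1 x * V2 y"
    if "x > 0" "y > 0" for x y using H0[OF that] FJ by simp
  have H': "measure M {\<omega> \<in> space M. Y \<omega> \<le> x \<and> X \<omega> \<le> y} = (1 - U2 x) * (1 - U1 y) + \<delta> * V2 x * V1 y"
    if "x > 0" "y > 0" for x y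
  proof -
    have "{\<omega> \<in> space M. Y \<omega> \<le> x \<and> X \<omega> \<le> y} = {\<omega> \<in> space M. X \<omega> \<le> y \<and> Y \<omega> \<le> x}" by auto
    then show ?thesis using H[OF that(2,1)] by (simp add: mult_ac)
  qed
  have pos': "AE \<omega> in M. Y \<omega> > 0 \<and> X \<omega> > 0" using pos by eventually_elim auto
  have U1lim: "(\<lambda>n. U1 (real n)) \<longlonglongrightarrow> 0" unfolding U1_def using l1 by (intro exp_sq_lim) simp
  have U2lim: "(\<lambda>n. U2 (real n)) \<longlonglongrightarrow> 0" unfolding U2_def using l2 by (intro exp_sq_lim) simp
  have V1lim: "(\<lambda>n. V1 (real n)) \<longlonglongrightarrow> 0"
  proof -
    have "(\<lambda>n. 1 - exp (\<alpha> * (exp (- (real n)\<^sup>2 / (2 * l1\<^sup>2)) - exp (- (real n)\<^sup>2 / l1\<^sup>2))))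
        \<longlonglongrightarrow> 1 - exp (\<alpha> * (0 - 0))"
      using l1 by (intro tendsto_intros exp_sq_lim) auto
    then show ?thesis unfolding V1_def by simp
  qed
  have V2lim: "(\<lambda>n. V2 (real n)) \<longlonglongrightarrow> 0"
  proof -
    have "(\<lambda>n. 1 - exp (\<alpha> * (exp (- (real n)\<^sup>2 / (2 * l2\<^sup>2)) - exp (- (real n)\<^sup>2 / l2\<^sup>2))))
        \<longlonglongrightarrow> 1 - exp (\<alpha> * (0 - 0))"
      using l2 by (intro tendsto_intros exp_sq_lim) auto
    then show ?thesis unfolding V2_def by simp
  qed
  have U10: "U1 0 = 1" "U2 0 = 1" "V1 0 = 0" "V2 0 = 0" by (simp_all add: U1_def U2_def V1_def V2_def)
  have MX: "measure M {\<omega> \<in> space M. X \<omega> \<le> a} = 1 - U1 a" if "a \<ge> 0" for a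
    by (rule marg_generic[OF P XM YM pos H U2lim V2lim U10(1) that])
  have MY: "measure M {\<omega> \<in> space M. Y \<omega> \<le> b} = 1 - U2 b" if "b \<ge> 0" for b
    by (rule marg_generic[OF P YM XM pos' H' U1lim V1lim U10(2) that])
  have J: "measure M {\<omega> \<in> space M. X \<omega> \<le> a \<and> Y \<omega> \<le> b} = (1 - U1 a) * (1 - U2 b) + \<delta> * V1 a * V2 b"
    if a: "a \<ge> 0" and b: "b \<ge> 0" for a b
  proof (cases "a > 0 \<and> b > 0")
    case True then show ?thesis using H by blast
  next
    case False
    then have "a = 0 \<or> b = 0" using a b by auto
    then show ?thesis
    proof
      assume a0: "a = 0"
      have "measure M {\<omega> \<in> space M. X \<omega> \<le> a \<and> Y \<omega> \<le> b} \<le> measure M {\<omega> \<in> space M. X \<omega> \<le> 0}"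
        using a0 by (intro finite_measure_mono evX) auto
      also have "\<dots> = 0" using MX[of 0] U10 by simp
      finally show ?thesis using a0 U10 measure_nonneg[of M] by (simp add: order_antisym)
    next
      assume b0: "b = 0"
      have "measure M {\<omega> \<in> space M. X \<omega> \<le> a \<and> Y \<omega> \<le> b} \<le> measure M {\<omega> \<in> space M. Y \<omega> \<le> 0}"
        using b0 by (intro finite_measure_mono evY) auto
      also have "\<dots> = 0" using MY[of 0] U10 by simp
      finally show ?thesis using b0 U10 measure_nonneg[of M] by (simp add: order_antisym)
    qed
  qed
  have surv: "measure M {\<omega> \<in> space M. a < X \<omega> \<and> b < Y \<omega>} = U1 a * U2 b + \<delta> * V1 a * V2 b"
    if "a \<ge> 0" "b \<ge> 0" for a b
    by (rule surv_generic[where ?U1.0=U1 and ?U2.0=U2 and ?V1.0=V1 and ?V2.0=V2 and \<delta>=\<delta>,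
          OF P XM YM J[OF that] MX[OF that(1)] MY[OF that(2)]])
  have iU1: "integrable (mu r) U1" "(\<integral>a. U1 a \<partial>mu r) = Lc l1 r"
    unfolding U1_def using mu_u[OF l1 r] by auto
  have iU2: "integrable (mu s) U2" "(\<integral>a. U2 a \<partial>mu s) = Lc l2 s"
    unfolding U2_def using mu_u[OF l2 s] by auto
  have iV1: "integrable (mu r) V1" "(\<integral>a. V1 a \<partial>mu r) = Lc l1 r * \<alpha> * S_coef \<alpha> r"
    unfolding V1_def using mu_v[OF l1 r, of \<alpha>] by auto
  have iV2: "integrable (mu s) V2" "(\<integral>a. V2 a \<partial>mu s) = Lc l2 s * \<alpha> * S_coef \<alpha> s"
    unfolding V2_def using mu_v[OF l2 s, of \<alpha>] by auto
  have main: "integrable M (\<lambda>\<omega>. X \<omega> powr r * Y \<omega> powr s) \<and>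
    (\<integral>\<omega>. X \<omega> powr r * Y \<omega> powr s \<partial>M)
      = (\<integral>a. U1 a \<partial>mu r) * (\<integral>b. U2 b \<partial>mu s) + \<delta> * (\<integral>a. V1 a \<partial>mu r) * (\<integral>b. V2 b \<partial>mu s)"
    by (rule moment_generic[OF P XM YM pos surv r s]) (simp_all add: iU1 iU2 iV1 iV2)
  have p2: "2 powr ((r + s) / 2) = 2 powr (r / 2) * 2 powr (s / 2)"
    by (simp add: powr_add[symmetric] add_divide_distrib)
  have "(\<integral>a. U1 a \<partial>mu r) * (\<integral>b. U2 b \<partial>mu s) + \<delta> * (\<integral>a. V1 a \<partial>mu r) * (\<integral>b. V2 b \<partial>mu s)
      = l1 powr r * l2 powr s * 2 powr ((r + s) / 2) * Gamma (1 + r / 2) * Gamma (1 + s / 2)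
           * (1 + \<delta> * \<alpha>\<^sup>2 * S_coef \<alpha> r * S_coef \<alpha> s)"
    unfolding iU1(2) iU2(2) iV1(2) iV2(2) Lc_def p2 by (simp add: algebra_simps power2_eq_square)
  then show ?thesis using main by simp
qed

end
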